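(* Let $\mathcal{I}$ be a hyperspectral image whose pixel-centred cuboids $B$ (each labelled by the class $y\in\mathcal{Y}=\{1,\dots,K\}$ of its central pixel) are partitioned into a training set $\mathcal{D}_{\text{train}}$ and the remaining cuboids, with the remaining cuboids randomly split into a calibration set $\{(B_i,y_i)\}_{i=1}^n$ and a test set. Let $S$ be a non-conformity score function derived from an HSI classifier trained on $\mathcal{D}_{\text{train}}$, such that for every cuboid $B$ and label $y$, $S(B,y)$ is invariant under any permutation of the union of the calibration and test sets. Fix $\lambda\in[0,1]$ and define the Score Aggregation Operator recursively by $\mathcal{V}_0=S$ and, for $k\ge1$, $$\mathcal{V}_k(B_i,y)=(1-\lambda)\mathcal{V}_{k-1}(B_i,y)+\frac{\lambda}{|\mathcal{N}_i|}\sum_{B_j\in\mathcal{N}_i}\mathcal{V}_{k-1}(B_j,y),$$ where $\mathcal{N}_i$ is the set of neighbouring cuboids around the central pixel of $B_i$ that are not in $\mathcal{D}_{\text{train}}$. Fix an integer $k\ge0$, let $(B_{n+1},y_{n+1})$ be a sample from the test set, set $\hat s_i:=\mathcal{V}_k(B_i,y_i)$ for $i=1,\dots,n$, and for $\alpha\in(0,1)$ let $$\hat\tau=\inf\Big\{s\ \Big|\ \frac{|\{i:\hat s_i\le s\}|}{n}\ge\frac{\lceil (n+1)(1-\alpha)\rceil}{n}\Big\},\qquad \hat{\mathcal{C}}_{1-\alpha}(B_{n+1};\hat\tau):=\{y\in\mathcal{Y}\mid \mathcal{V}_k(B_{n+1},y)\le\hat\tau\}.$$ Then $$\mathbb{P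}\big(y_{n+1}\in\hat{\mathcal{C}}_{1-\alpha}(B_{n+1};\hat\tau)\big)\ge1-\alpha.$$
   Context: A cuboid $B\in\mathbb{R}^{P\times P\times U}$ is the $P\times P$ spatial patch of the image (with all $U$ spectral bands) centred at a pixel. A non-conformity score function $S(B,y)$ assigns a real number measuring how poorly label $y$ conforms to the classifier's prediction at $B$. The infimum of the empty set is $+\infty$. *)

theory Defs
  imports "HOL-Probability.Probability" "HOL-Combinatorics.Multiset_Permutations"
begin

fun SAO :: "real \<Rightarrow> ('b \<Rightarrow> 'b set) \<Rightarrow> ('b \<Rightarrow> nat \<Rightarrow> real) \<Rightarrow> nat \<Rightarrow> 'b \<Rightarrow> nat \<Rightarrow> real" where
  "SAO lam N S 0 b y = S b y"
| "SAO lam N S (Suc k) b y =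
     (1 - lam) * SAO lam N S k b y
     + lam / real (card (N b)) * (\<Sum>b'\<in>N b. SAO lam N S k b' y)"

text \<open>Conformal threshold tau-hat from calibration scores s_0..s_(n-1) (infimum in ereal,
  Inf of empty set = +infinity).\<close>
definition conf_threshold :: "nat \<Rightarrow> (nat \<Rightarrow> real) \<Rightarrow> real \<Rightarrow> ereal" where
  "conf_threshold n s \<alpha> =
     Inf {ereal t | t. real (card {i. i < n \<and> s i \<le> t}) / real n
                       \<ge> real_of_int \<lceil>real (n + 1) * (1 - \<alpha>)\<rceil> / real n}"

definition pred_set :: "nat \<Rightarrow> (nat \<Rightarrow> real) \<Rightarrow> ereal \<Rightarrow> nat set" where
  "pred_set K V \<tau> = {y \<in> {1..K}. ereal (V y) \<le> \<tau>}"

end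

theory Submission
  imports Defs
begin

lemma rank_count:
  fixes v :: "nat \<Rightarrow> real"
  shows "card {j. j \<le> n \<and> q \<le> card {i. i \<le> n \<and> v i < v j}} \<le> n + 1 - q"
proof (cases "{j. j \<le> n \<and> q \<le> card {i. i \<le> n \<and> v i < v j}} = {}")
  case True show ?thesis unfolding True by simp
next
  case False
  define J where "J = {j. j \<le> n \<and> q \<le> card {i. i \<le> n \<and> v i < v j}}"
  have fJ: "finite J" unfolding J_def by simp
  have "J \<noteq> {}" using False J_def by simp
  then have "Min (v ` J) \<in> v ` J" using fJ by (intro Min_in) auto
  then obtain j0 where j0a: "j0 \<in> J" "v j0 = Min (v ` J)" by auto
  have j0: "j0 \<in> J" "\<And>j. j \<in> J \<Longrightarrow> v j0 \<le> v j"
    using j0a fJ by auto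
  define L where "L = {i. i \<le> n \<and> v i < v j0}"
  have "q \<le> card L" using j0(1) unfolding J_def L_def by simp
  moreover have "J \<inter> L = {}" using j0(2) unfolding L_def by force
  moreover have "J \<union> L \<subseteq> {..n}" unfolding J_def L_def by auto
  ultimately have "card J + card L \<le> n + 1"
  proof -
    assume dis: "J \<inter> L = {}" and sub: "J \<union> L \<subseteq> {..n}"
    have fL: "finite L" unfolding L_def by simp
    have "card J + card L = card (J \<union> L)" using card_Un_disjoint[OF fJ fL dis] by simp
    also have "\<dots> \<le> card {..n}" using sub by (intro card_mono) auto
    finally show ?thesis by simp
  qed
  with \<open>q \<le> card L\<close> show ?thesis unfolding J_def by linarith
qed


lemma swap_card:
  fixes f :: "'b \<Rightarrow> real" and P :: "'b list set"
  assumes lenP: "\<And>xs. xs \<in> P \<Longrightarrow> n < length xs"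
    and closedP: "\<And>xs \<tau>. xs \<in> P \<Longrightarrow> \<tau> permutes {..<length xs} \<Longrightarrow> permute_list \<tau> xs \<in> P"
    and j: "j \<le> n"
  defines "R \<equiv> \<lambda>xs j. card {i. i \<le> n \<and> f (xs ! i) < f (xs ! j)}"
  shows "card {xs\<in>P. q \<le> R xs j} = card {xs\<in>P. q \<le> R xs n}"
proof -
  define \<tau> where "\<tau> = Transposition.transpose j n"
  define g where "g = (\<lambda>xs::'b list. permute_list \<tau> xs)"
  have tp: "\<tau> permutes {..<length xs}" if "xs \<in> P" for xs
    unfolding \<tau>_def using lenP[OF that] j by (intro permutes_swap_id) auto
  have gnth: "g xs ! i = xs ! \<tau> i" if "xs \<in> P" "i < length xs" for xs i
    unfolding g_def using permute_list_nth[OF tp[OF that(1)] that(2)] .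
  have gP: "g xs \<in> P" if "xs \<in> P" for xs unfolding g_def using closedP[OF that tp[OF that]] .
  have ttau: "\<tau> (\<tau> i) = i" for i unfolding \<tau>_def by simp
  have gg: "g (g xs) = xs" if "xs \<in> P" for xs
  proof (rule nth_equalityI)
    show "length (g (g xs)) = length xs" unfolding g_def by simp
    fix i assume "i < length (g (g xs))"
    then have i: "i < length xs" unfolding g_def by simp
    have "\<tau> i < length xs" using permutes_in_image[OF tp[OF that], of i] i by simp
    then show "g (g xs) ! i = xs ! i"
      using gnth[OF gP[OF that]] gnth[OF that] i ttau unfolding g_def by simp
  qed
  have Rg: "R (g xs) n = R xs j" if "xs \<in> P" for xs
  proof -
    have len: "n < length xs" using lenP[OF that] .
    have tn: "\<tau> n = j" unfolding \<tau>_def by simp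
    have le: "i \<le> n \<longleftrightarrow> \<tau> i \<le> n" for i using j unfolding \<tau>_def
      by (auto simp: Transposition.transpose_def)
    have "{i. i \<le> n \<and> f (g xs ! i) < f (g xs ! n)} = \<tau> ` {i. i \<le> n \<and> f (xs ! i) < f (xs ! j)}"
    proof (intro set_eqI iffI)
      fix i assume "i \<in> {i. i \<le> n \<and> f (g xs ! i) < f (g xs ! n)}"
      then show "i \<in> \<tau> ` {i. i \<le> n \<and> f (xs ! i) < f (xs ! j)}"
        using gnth[OF that] len tn le ttau
        by (intro image_eqI[of _ _ "\<tau> i"]) (auto)
    next
      fix i assume "i \<in> \<tau> ` {i. i \<le> n \<and> f (xs ! i) < f (xs ! j)}"
      then obtain i' where "i = \<tau> i'" "i' \<le> n" "f (xs ! i') < f (xs ! j)" by auto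
      moreover have "\<tau> i' \<le> n" using le \<open>i' \<le> n\<close> ttau by metis
      moreover have "g xs ! \<tau> i' = xs ! i'" using gnth[OF that, of "\<tau> i'"] ttau len \<open>\<tau> i' \<le> n\<close> by simp
      moreover have "g xs ! n = xs ! j" using gnth[OF that, of n] len tn by simp
      ultimately show "i \<in> {i. i \<le> n \<and> f (g xs ! i) < f (g xs ! n)}" by auto
    qed
    moreover have "inj \<tau>" unfolding \<tau>_def by simp
    ultimately show ?thesis unfolding R_def by (simp add: card_image inj_on_subset)
  qed
  have "bij_betw g {xs\<in>P. q \<le> R xs n} {xs\<in>P. q \<le> R xs j}"
  proof (rule bij_betw_byWitness[where f'=g])
    show "\<forall>a\<in>{xs \<in> P. q \<le> R xs n}. g (g a) = a" using gg by blast
    show "\<forall>a\<in>{xs \<in> P. q \<le> R xs j}. g (g a) = a" using gg by blast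
    show "g ` {xs \<in> P. q \<le> R xs n} \<subseteq> {xs \<in> P. q \<le> R xs j}"
    proof
      fix y assume "y \<in> g ` {xs \<in> P. q \<le> R xs n}"
      then obtain x where x0: "x \<in> {xs \<in> P. q \<le> R xs n}" and x3: "y = g x" by (rule imageE)
      then have x: "x \<in> P" "q \<le> R x n" "y = g x" by simp_all
      have "R y j = R (g y) n" using Rg[OF gP[OF x(1)]] x(3) by simp
      also have "\<dots> = R x n" using gg[OF x(1)] x(3) by simp
      finally have "R y j = R x n" .
      moreover have "y \<in> P" using gP[OF x(1)] x(3) by simp
      ultimately show "y \<in> {xs \<in> P. q \<le> R xs j}" using x(2) by simp
    qed
    show "g ` {xs \<in> P. q \<le> R xs j} \<subseteq> {xs \<in> P. q \<le> R xs n}"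
    proof
      fix y assume "y \<in> g ` {xs \<in> P. q \<le> R xs j}"
      then obtain x where x0: "x \<in> {xs \<in> P. q \<le> R xs j}" and x3: "y = g x" by (rule imageE)
      then have x: "x \<in> P" "q \<le> R x j" "y = g x" by simp_all
      have "R y n = R x j" using Rg[OF x(1)] x(3) by simp
      moreover have "y \<in> P" using gP[OF x(1)] x(3) by simp
      ultimately show "y \<in> {xs \<in> P. q \<le> R xs n}" using x(2) by simp
    qed
  qed
  then show ?thesis by (simp add: bij_betw_same_card)
qed


lemma card_filter_sum:
  "card {j. j \<le> (n::nat) \<and> \<Phi> j} = (\<Sum>j\<le>n. if \<Phi> j then 1 else 0 :: nat)"
proof -
  have "{j. j \<le> n \<and> \<Phi> j} = {..n} \<inter> {j. \<Phi> j}" by auto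
  then show ?thesis by (simp add: sum.If_cases)
qed

lemma card_filter_sum2:
  "finite P \<Longrightarrow> card {x\<in>P. \<Phi> x} = (\<Sum>x\<in>P. if \<Phi> x then 1 else 0 :: nat)"
proof -
  assume "finite P"
  have "{x\<in>P. \<Phi> x} = P \<inter> {j. \<Phi> j}" by auto
  then show ?thesis using \<open>finite P\<close> by (simp add: sum.If_cases)
qed

theorem proposition2:
  fixes A Dtrain :: "'b set"            \<comment> \<open>all cuboids of the image; training cuboids\<close>
    and lab :: "'b \<Rightarrow> nat"             \<comment> \<open>class label of the central pixel\<close>
    and K n k :: nat
    and N :: "'b \<Rightarrow> 'b set"            \<comment> \<open>non-training neighbours of a cuboid\<close>
    and S :: "'b list \<Rightarrow> 'b \<Rightarrow> nat \<Rightarrow> real"  \<comment> \<open>score, may depend on the ordering of calib+test\<close>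
    and lam \<alpha> :: real
  defines "U \<equiv> A - Dtrain"
  assumes "finite A" and "Dtrain \<subseteq> A"
    and "\<forall>b\<in>A. lab b \<in> {1..K}"
    and "\<forall>b\<in>U. N b \<subseteq> U"
    and "1 \<le> n" and "n + 1 \<le> card U"
    and "\<forall>xs\<in>permutations_of_set U. \<forall>ys\<in>permutations_of_set U. S xs = S ys"
    and "0 \<le> lam" and "lam \<le> 1"
    and "0 < \<alpha>" and "\<alpha> < 1"
  shows "measure_pmf.prob (pmf_of_set (permutations_of_set U))
           {xs. lab (xs ! n) \<in>
                  pred_set K (SAO lam N (S xs) k (xs ! n))
                    (conf_threshold n (\<lambda>i. SAO lam N (S xs) k (xs ! i) (lab (xs ! i))) \<alpha>)}
         \<ge> 1 - \<alpha>"
proof -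
  define P where "P = permutations_of_set U"
  have finU: "finite U" using \<open>finite A\<close> unfolding U_def by simp
  have finP: "finite P" unfolding P_def by simp
  have neP: "P \<noteq> {}" unfolding P_def using finU by simp
  then obtain ys0 where ys0: "ys0 \<in> P" by blast
  have Sxs: "S xs = S ys0" if "xs \<in> P" for xs
    using \<open>\<forall>xs\<in>permutations_of_set U. \<forall>ys\<in>permutations_of_set U. S xs = S ys\<close> that ys0
    unfolding P_def by blast
  define f where "f b = SAO lam N (S ys0) k b (lab b)" for b
  define R where "R xs j = card {i. i \<le> n \<and> f (xs ! i) < f (xs ! j)}" for xs j
  define Q :: int where "Q = \<lceil>real (n + 1) * (1 - \<alpha>)\<rceil>"
  define q where "q = nat Q"
  define E where "E = {xs. lab (xs ! n) \<in>
                  pred_set K (SAO lam N (S xs) k (xs ! n))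
                    (conf_threshold n (\<lambda>i. SAO lam N (S xs) k (xs ! i) (lab (xs ! i))) \<alpha>)}"
  define Bd where "Bd = {xs\<in>P. q \<le> R xs n}"
  have lenP: "n < length xs" if "xs \<in> P" for xs
    using length_finite_permutations_of_set[of xs U] that \<open>n + 1 \<le> card U\<close> unfolding P_def by simp
  have closedP: "permute_list \<tau> xs \<in> P" if "xs \<in> P" "\<tau> permutes {..<length xs}" for xs \<tau>
  proof -
    have m: "mset (permute_list \<tau> xs) = mset xs" using that(2) by simp
    show ?thesis using that(1) mset_eq_setD[OF m] mset_eq_imp_distinct_iff[OF m]
      unfolding P_def permutations_of_set_def by simp
  qed
  have key: "xs \<in> Bd" if xsP: "xs \<in> P" and nE: "xs \<notin> E" for xs
  proof -
    have "xs ! n \<in> U" using lenP[OF xsP] xsP unfolding P_def permutations_of_set_def by auto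
    then have labn: "lab (xs ! n) \<in> {1..K}" using \<open>\<forall>b\<in>A. lab b \<in> {1..K}\<close> unfolding U_def by blast
    define s where "s i = f (xs ! i)" for i
    have "\<not> ereal (f (xs ! n)) \<le> conf_threshold n s \<alpha>"
      using nE labn Sxs[OF xsP] unfolding E_def pred_set_def s_def f_def by simp
    then have "conf_threshold n s \<alpha> < ereal (f (xs ! n))" by simp
    then obtain x where x: "x \<in> {ereal t | t. real (card {i. i < n \<and> s i \<le> t}) / real n
                       \<ge> real_of_int \<lceil>real (n + 1) * (1 - \<alpha>)\<rceil> / real n}" "x < ereal (f (xs ! n))"
      unfolding conf_threshold_def Inf_less_iff by blast
    then obtain t where t: "x = ereal t" "real (card {i. i < n \<and> s i \<le> t}) / real n \<ge> real_of_int Q / real n"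
      unfolding Q_def by blast
    have tl: "t < f (xs ! n)" using x(2) t(1) by simp
    have npos: "real n > 0" using \<open>1 \<le> n\<close> by simp
    have "real_of_int Q \<le> real (card {i. i < n \<and> s i \<le> t})"
      using t(2) npos by (simp add: divide_le_cancel)
    then have "q \<le> card {i. i < n \<and> s i \<le> t}" unfolding q_def by linarith
    also have "\<dots> \<le> R xs n" unfolding R_def s_def
      by (rule card_mono) (use tl in auto)
    finally show ?thesis unfolding Bd_def using xsP by simp
  qed
  have swap: "card {xs\<in>P. q \<le> R xs j} = card Bd" if "j \<le> n" for j
    unfolding Bd_def R_def
    by (rule swap_card[of P n, OF lenP closedP that])
  have "(n + 1) * card Bd = (\<Sum>j\<le>n. card {xs\<in>P. q \<le> R xs j})"
    using swap by simp
  also have "\<dots> = (\<Sum>j\<le>n. \<Sum>xs\<in>P. if q \<le> R xs j then 1 else 0)"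
    using card_filter_sum2[OF finP] by simp
  also have "\<dots> = (\<Sum>xs\<in>P. \<Sum>j\<le>n. if q \<le> R xs j then 1 else 0)"
    by (rule sum.swap)
  also have "\<dots> = (\<Sum>xs\<in>P. card {j. j \<le> n \<and> q \<le> R xs j})"
    using card_filter_sum by simp
  also have "\<dots> \<le> (\<Sum>xs\<in>P. n + 1 - q)"
    by (rule sum_mono) (unfold R_def, rule rank_count)
  also have "\<dots> = card P * (n + 1 - q)" by simp
  finally have cnt: "(n + 1) * card Bd \<le> card P * (n + 1 - q)" .
  have "card P \<le> card (P \<inter> E) + card Bd"
  proof -
    have "P - E \<subseteq> Bd" using key by blast
    then have "card (P - E) \<le> card Bd" using finP unfolding Bd_def by (intro card_mono) auto
    moreover have "card P = card (P \<inter> E) + card (P - E)"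
      using finP by (metis Diff_Diff_Int card_Diff_subset_Int finite_Diff inf_le1 card_mono
            add_diff_inverse_nat not_le Int_lower1 card_Un_disjoint Un_Diff_Int Diff_disjoint inf_commute
            Int_Diff_disjoint)
    ultimately show ?thesis by linarith
  qed
  have Qge: "real (n + 1) * (1 - \<alpha>) \<le> real_of_int Q" unfolding Q_def by linarith
  have "0 < real (n + 1) * (1 - \<alpha>)" using \<open>\<alpha> < 1\<close> by (intro mult_pos_pos) auto
  then have Qpos: "0 \<le> Q" using Qge by linarith
  have rq: "real (n + 1 - q) \<le> real (n + 1) * \<alpha>"
  proof (cases "q \<le> n + 1")
    case True
    then have "real (n + 1 - q) = real (n + 1) - real q" by (simp add: of_nat_diff)
    moreover have "real q = real_of_int Q" unfolding q_def using Qpos by simp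
    ultimately show ?thesis using Qge by (simp add: algebra_simps)
  next
    case False then show ?thesis using \<open>0 < \<alpha>\<close> by simp
  qed
  have cP: "real (card P) > 0" using finP neP by (simp add: card_gt_0_iff)
  have "real (n + 1) * real (card Bd) \<le> real (card P) * real (n + 1 - q)"
    using cnt by (metis of_nat_le_iff of_nat_mult)
  also have "\<dots> \<le> real (card P) * (real (n + 1) * \<alpha>)"
    using rq cP by (intro mult_left_mono) auto
  finally have "real (card Bd) \<le> real (card P) * \<alpha>"
    by (simp add: mult.left_commute mult_le_cancel_left_pos del: of_nat_Suc)
  then have "real (card P) * (1 - \<alpha>) \<le> real (card (P \<inter> E))"
    using \<open>card P \<le> card (P \<inter> E) + card Bd\<close> by (simp add: algebra_simps) linarith?
  then have "1 - \<alpha> \<le> real (card (P \<inter> E)) / real (card P)"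
    using cP by (simp add: field_simps)
  moreover have "measure_pmf.prob (pmf_of_set P) E = real (card (P \<inter> E)) / real (card P)"
    using measure_pmf_of_set[OF neP finP] by simp
  ultimately show ?thesis unfolding P_def E_def by simp
qed

end
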